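(* Let $q$ be a prime power with $q\not\equiv0\pmod3$. The line $L_c$ of $\mathrm{PG}(3,q)$ through $\mathbf{P}(1,0,0,1)$ and $\mathbf{P}(0,0,1,0)$ is an $\mathcal{E}_{nG}$-line.
   Context: Points of $\mathrm{PG}(3,q)$ are written $\mathbf{P}(x_0,x_1,x_2,x_3)$ over $\mathbb{F}_q$. For $t$ in $\mathbb{F}_q$ or in $\mathbb{F}_{q^2}$, put $P(t)=\mathbf{P}(t^3,t^2,t,1)$ and $P(\infty)=\mathbf{P}(1,0,0,0)$; the twisted cubic is $\mathscr{C}=\{P(t):t\in\mathbb{F}_q\cup\{\infty\}\}$. The osculating plane $\pi_{osc}(t)$ is the plane $x_0-3tx_1+3t^2x_2-t^3x_3=0$ for finite $t$, and $\pi_{osc}(\infty)$ is $x_3=0$. An imaginary chord is a line of $\mathrm{PG}(3,q)$ joining $P(t_1)$ and $P(t_2)$ for conjugate $t_1,t_2=t_1^q\in\mathbb{F}_{q^2}\setminus\mathbb{F}_q$; an imaginary axis is a line of $\mathrm{PG}(3,q)$ equal to $\pi_{osc}(t_1)\cap\pi_{osc}(t_2)$ for conjugate $t_1,t_2\in\mathbb{F}_{q^2}\setminus\mathbb{F}_q$. An $\mathcal{E}_{nG}$-line is a line of $\mathrm{PG}(3,q)$ having no point on $\mathscr{C}$, not contained in any osculating plane $\pi_{osc}(t)$, $t\in\mathbb{F}_q\cup\{\infty\}$, and which is neither an imaginary chord nor an imaginary axis. *)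

theory Defs
  imports Main
begin

text \<open>Homogeneous coordinates (x0,x1,x2,x3) of PG(3,F) for a field F.
  A point is represented by a nonzero vector; a line is a 2-dimensional
  subspace of F^4 (as a set of vectors).\<close>

type_synonym 'a vec4 = "'a \<times> 'a \<times> 'a \<times> 'a"

fun vadd :: "'a::field vec4 \<Rightarrow> 'a vec4 \<Rightarrow> 'a vec4" where
  "vadd (a0,a1,a2,a3) (b0,b1,b2,b3) = (a0+b0, a1+b1, a2+b2, a3+b3)"

fun smul :: "'a::field \<Rightarrow> 'a vec4 \<Rightarrow> 'a vec4" where
  "smul c (a0,a1,a2,a3) = (c*a0, c*a1, c*a2, c*a3)"

fun dot4 :: "'a::field vec4 \<Rightarrow> 'a vec4 \<Rightarrow> 'a" where
  "dot4 (a0,a1,a2,a3) (b0,b1,b2,b3) = a0*b0 + a1*b1 + a2*b2 + a3*b3"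

fun emb4 :: "('a \<Rightarrow> 'b) \<Rightarrow> 'a vec4 \<Rightarrow> 'b vec4" where
  "emb4 f (a0,a1,a2,a3) = (f a0, f a1, f a2, f a3)"

definition zero4 :: "'a::field vec4" where
  "zero4 = (0,0,0,0)"

definition span2 :: "'a::field vec4 \<Rightarrow> 'a vec4 \<Rightarrow> 'a vec4 set" where
  "span2 u v = {vadd (smul a u) (smul b v) | a b. True}"

definition lin_indep2 :: "'a::field vec4 \<Rightarrow> 'a vec4 \<Rightarrow> bool" where
  "lin_indep2 u v \<longleftrightarrow> (\<forall>a b. vadd (smul a u) (smul b v) = zero4 \<longrightarrow> a = 0 \<and> b = 0)"

definition is_line :: "'a::field vec4 set \<Rightarrow> bool" where
  "is_line L \<longleftrightarrow> (\<exists>u v. lin_indep2 u v \<and> L = span2 u v)"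

definition point_on :: "'a::field vec4 \<Rightarrow> 'a vec4 set \<Rightarrow> bool" where
  "point_on x L \<longleftrightarrow> x \<noteq> zero4 \<and> x \<in> L"

definition tc :: "'a::field \<Rightarrow> 'a vec4" where
  "tc t = (t^3, t^2, t, 1)"

definition tc_inf :: "'a::field vec4" where
  "tc_inf = (1, 0, 0, 0)"

text \<open>Coefficient vectors of the osculating planes:
  x0 - 3t x1 + 3t^2 x2 - t^3 x3 = 0, and x3 = 0 for t = infinity.\<close>
definition osc :: "'a::field \<Rightarrow> 'a vec4" where
  "osc t = (1, -(3*t), 3*t^2, -(t^3))"

definition osc_inf :: "'a::field vec4" where
  "osc_inf = (0, 0, 0, 1)"

definition plane_set :: "'a::field vec4 \<Rightarrow> 'a vec4 set" where
  "plane_set c = {x. dot4 c x = 0}"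

definition in_plane :: "'a::field vec4 set \<Rightarrow> 'a vec4 \<Rightarrow> bool" where
  "in_plane L c \<longleftrightarrow> L \<subseteq> plane_set c"

text \<open>Extension of an F_q-line L to F_{q^2} via the field embedding f.\<close>
definition ext_line :: "('a::field \<Rightarrow> 'b::field) \<Rightarrow> 'a vec4 set \<Rightarrow> 'b vec4 set" where
  "ext_line f L = {vadd (smul a (emb4 f x)) (smul b (emb4 f y)) | a b x y. x \<in> L \<and> y \<in> L}"

text \<open>Imaginary chord: L (over F_q) joins P(t) and P(t^q), t in F_{q^2} \ F_q.\<close>
definition imag_chord :: "('a::{field,finite} \<Rightarrow> 'b::field) \<Rightarrow> 'a vec4 set \<Rightarrow> bool" where
  "imag_chord f L \<longleftrightarrow>
     (\<exists>t. t \<notin> range f \<and> ext_line f L = span2 (tc t) (tc (t ^ card (UNIV :: 'a set))))"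

text \<open>Imaginary axis: L = pi_osc(t) \<inter> pi_osc(t^q), t in F_{q^2} \ F_q.\<close>
definition imag_axis :: "('a::{field,finite} \<Rightarrow> 'b::field) \<Rightarrow> 'a vec4 set \<Rightarrow> bool" where
  "imag_axis f L \<longleftrightarrow>
     (\<exists>t. t \<notin> range f \<and>
        ext_line f L = plane_set (osc t) \<inter> plane_set (osc (t ^ card (UNIV :: 'a set))))"

definition EnG_line :: "('a::{field,finite} \<Rightarrow> 'b::field) \<Rightarrow> 'a vec4 set \<Rightarrow> bool" where
  "EnG_line f L \<longleftrightarrow>
     is_line L \<and>
     (\<forall>t. \<not> point_on (tc t) L) \<and> \<not> point_on tc_inf L \<and>
     (\<forall>t. \<not> in_plane L (osc t)) \<and> \<not> in_plane L osc_inf \<and>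
     \<not> imag_chord f L \<and> \<not> imag_axis f L"

definition L_c :: "'a::field vec4 set" where
  "L_c = span2 (1, 0, 0, 1) (0, 0, 1, 0)"

end

theory Submission
  imports Defs "HOL-Number_Theory.Residues"
begin

lemma three_ne_zero_fin:
  assumes "card (UNIV :: 'a::{field,finite} set) mod 3 \<noteq> 0"
  shows "(3::'a) \<noteq> 0"
proof
  assume h: "(3::'a) = 0"
  have "of_nat 3 = (0::'a)" using h by simp
  hence d: "CHAR('a) dvd 3" by (simp only: of_nat_eq_0_iff_char_dvd)
  have "CHAR('a) \<noteq> 1" by simp
  moreover have "CHAR('a) \<le> 3" using d by (rule dvd_imp_le) simp
  moreover have "CHAR('a) \<noteq> 2" using d by auto
  moreover have "CHAR('a) \<noteq> 0" using d by (metis dvd_0_left_iff zero_neq_numeral)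
  ultimately have "CHAR('a) = 3" by linarith
  with CHAR_dvd_CARD[where 'a='a] have "3 dvd card (UNIV :: 'a set)" by simp
  with assms show False by simp
qed

lemma Lc_mem: "x \<in> (L_c :: 'a::field vec4 set) \<longleftrightarrow> (\<exists>a b. x = (a,0,b,a))"
  unfolding L_c_def span2_def by auto

theorem lemma3p1:
  fixes f :: "'a::{field,finite} \<Rightarrow> 'b::{field,finite}"
  assumes q_not3: "card (UNIV :: 'a set) mod 3 \<noteq> 0"
    and q2: "card (UNIV :: 'b set) = card (UNIV :: 'a set) ^ 2"
    and hom_add: "\<And>x y. f (x + y) = f x + f y"
    and hom_mult: "\<And>x y. f (x * y) = f x * f y"
    and hom_one: "f 1 = 1"
  shows "EnG_line f (L_c :: 'a vec4 set)"
proof -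
  have three: "(3::'a) \<noteq> 0" using three_ne_zero_fin q_not3 by blast
  have "f 0 + f 0 = f 0" using hom_add[of 0 0] by simp
  hence f0: "f 0 = 0" by (metis add_cancel_right_right add_cancel_left_right)
  have f3: "f 3 = 3" using hom_add[of 1 2] hom_add[of 1 1] hom_one
    by (simp add: numeral_3_eq_3)
  have fnz: "f x \<noteq> 0" if "x \<noteq> 0" for x
  proof
    assume "f x = 0"
    hence "f (x * inverse x) = 0" by (simp add: hom_mult)
    with that hom_one show False by simp
  qed
  have three_b: "(3::'b) \<noteq> 0" using fnz[OF three] f3 by simp
  have ext: "x \<in> ext_line f L_c \<Longrightarrow> \<exists>a b. x = (a,0,b,a)" for x
    unfolding ext_line_def Lc_mem by (auto simp: f0)
  have e1: "(1,0,0,1) \<in> ext_line f L_c"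
    unfolding ext_line_def Lc_mem
    by (rule CollectI, rule exI[of _ 1], rule exI[of _ 0], rule exI[of _ "(1,0,0,1)"],
        rule exI[of _ "(1,0,0,1)"]) (auto simp: f0 hom_one)
  have e2: "(0,0,1,0) \<in> ext_line f L_c"
    unfolding ext_line_def Lc_mem
    by (rule CollectI, rule exI[of _ 1], rule exI[of _ 0], rule exI[of _ "(0,0,1,0)"],
        rule exI[of _ "(0,0,1,0)"]) (auto simp: f0 hom_one)
  have "is_line (L_c :: 'a vec4 set)"
    unfolding is_line_def L_c_def
    by (rule exI[of _ "(1,0,0,1)"], rule exI[of _ "(0,0,1,0)"]) (simp add: lin_indep2_def zero4_def)
  moreover have "\<forall>t. \<not> point_on (tc t) (L_c :: 'a vec4 set)"
    by (auto simp: point_on_def tc_def Lc_mem)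
  moreover have "\<not> point_on tc_inf (L_c :: 'a vec4 set)"
    by (auto simp: point_on_def tc_inf_def Lc_mem)
  moreover have "\<forall>t. \<not> in_plane (L_c :: 'a vec4 set) (osc t)"
  proof
    fix t :: 'a
    show "\<not> in_plane L_c (osc t)"
    proof
      assume "in_plane L_c (osc t)"
      hence a: "(1,0,0,1) \<in> plane_set (osc t)" and b: "(0,0,1,0) \<in> plane_set (osc t)"
        unfolding in_plane_def by (auto simp: Lc_mem)
      from b have "3*t^2 = 0" by (simp add: plane_set_def osc_def)
      with three have "t = 0" by simp
      with a show False by (simp add: plane_set_def osc_def)
    qed
  qed
  moreover have "\<not> in_plane (L_c :: 'a vec4 set) osc_inf"
  proof
    assume "in_plane (L_c :: 'a vec4 set) osc_inf"
    hence "((1,0,0,1) :: 'a vec4) \<in> plane_set osc_inf" unfolding in_plane_def by (auto simp: Lc_mem)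
    thus False by (simp add: plane_set_def osc_inf_def)
  qed
  moreover have "\<not> imag_chord f L_c"
  proof
    assume "imag_chord f L_c"
    then obtain t where h: "ext_line f L_c = span2 (tc t) (tc (t ^ card (UNIV :: 'a set)))"
      unfolding imag_chord_def by blast
    have "tc t \<in> span2 (tc t) (tc (t ^ card (UNIV :: 'a set)))"
      unfolding span2_def tc_def
      by (rule CollectI, rule exI[of _ 1], rule exI[of _ 0]) simp
    with h ext obtain a b where "tc t = (a,0,b,a)" by metis
    thus False by (auto simp: tc_def power3_eq_cube)
  qed
  moreover have "\<not> imag_axis f L_c"
  proof
    assume "imag_axis f L_c"
    then obtain t where h: "ext_line f L_c = plane_set (osc t) \<inter> plane_set (osc (t ^ card (UNIV :: 'a set)))"
      unfolding imag_axis_def by blast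
    from h e1 have a: "(1,0,0,1) \<in> plane_set (osc t)" by auto
    from h e2 have b: "(0,0,1,0) \<in> plane_set (osc t)" by auto
    from b have "3*t^2 = 0" by (simp add: plane_set_def osc_def)
    with three_b have "t = 0" by simp
    with a show False by (simp add: plane_set_def osc_def)
  qed
  ultimately show ?thesis unfolding EnG_line_def by blast
qed

end
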